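(* Let $n\ge3$, $\ell>0$, $\alpha\ge(n-2)\ell$, $S=\alpha I_n+\ell\mathbf{1}_n\mathbf{1}_n^\top$, and let $P\ne0$ be a real symmetric diagonally dominant $n\times n$ matrix with nonnegative entries. Let $Q=S^{-1}PS^{-1}$. Then $Q_{ii}-\sum_{j\ne i}Q_{ij}>0$ for every $i=1,\dots,n$.
   Context: For a real matrix $P$, $\Delta_i(P)=|P_{ii}|-\sum_{j\ne i}|P_{ij}|$; $P$ is diagonally dominant if $\Delta_i(P)\ge0$ for all $i$. *)

theory Defs
  imports "HOL-Analysis.Analysis"
begin

definition dd_margin :: "real^'n^'n \<Rightarrow> 'n \<Rightarrow> real" where
  "dd_margin P i = \<bar>P $ i $ i\<bar> - (\<Sum>j\<in>UNIV - {i}. \<bar>P $ i $ j\<bar>)"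

definition diag_dominant :: "real^'n^'n \<Rightarrow> bool" where
  "diag_dominant P \<longleftrightarrow> (\<forall>i. dd_margin P i \<ge> 0)"

definition ones_mat :: "real^'n^'n" where
  "ones_mat = (\<chi> i j. 1)"

end

theory Submission
  imports Defs
begin

lemma inv_unique:
  fixes S T :: "real^'n^'n"
  assumes "S ** T = mat 1" "T ** S = mat 1"
  shows "matrix_inv S = T"
proof -
  have "\<exists>A'. S ** A' = mat 1 \<and> A' ** S = mat 1" using assms by blast
  then have h: "S ** matrix_inv S = mat 1 \<and> matrix_inv S ** S = mat 1"
    unfolding matrix_inv_def by (rule someI_ex)
  have "matrix_inv S = matrix_inv S ** (S ** T)" using assms by simp
  also have "\<dots> = T" using h by (simp add: matrix_mul_assoc)
  finally show ?thesis .
qed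

lemma if_mult_l: "(if p then (a::real) else 0) * x = (if p then a * x else 0)" by simp
lemma if_mult_r: "x * (if p then (a::real) else 0) = (if p then a * x else 0)" by simp

lemma T_entry: "(a *\<^sub>R mat 1 - b *\<^sub>R ones_mat :: real^'n^'n) $ i $ k = (if i = k then a else 0) - b"
  by (simp add: ones_mat_def mat_def)

lemma mult_T_left:
  fixes P :: "real^'n^'n"
  shows "((a *\<^sub>R mat 1 - b *\<^sub>R ones_mat) ** P) $ i $ j = a * P$i$j - b * (\<Sum>k\<in>UNIV. P$k$j)"
proof -
  have "((a *\<^sub>R mat 1 - b *\<^sub>R ones_mat) ** P) $ i $ j = (\<Sum>k\<in>UNIV. ((if i = k then a else 0) - b) * P$k$j)"
    by (auto simp add: matrix_matrix_mult_def mat_def ones_mat_def intro!: sum.cong)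
  also have "\<dots> = (\<Sum>k\<in>UNIV. (if i = k then a * P$k$j else 0)) - (\<Sum>k\<in>UNIV. b * P$k$j)"
    by (simp add: left_diff_distrib sum_subtractf if_mult_l)
  also have "\<dots> = a * P$i$j - b * (\<Sum>k\<in>UNIV. P$k$j)"
    by (simp add: sum_distrib_left)
  finally show ?thesis .
qed

lemma mult_T_right:
  fixes P :: "real^'n^'n"
  shows "(P ** (a *\<^sub>R mat 1 - b *\<^sub>R ones_mat)) $ i $ j = a * P$i$j - b * (\<Sum>k\<in>UNIV. P$i$k)"
proof -
  have "(P ** (a *\<^sub>R mat 1 - b *\<^sub>R ones_mat)) $ i $ j = (\<Sum>k\<in>UNIV. P$i$k * ((if k = j then a else 0) - b))"
    by (auto simp add: matrix_matrix_mult_def mat_def ones_mat_def intro!: sum.cong)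
  also have "\<dots> = (\<Sum>k\<in>UNIV. (if k = j then a * P$i$k else 0)) - (\<Sum>k\<in>UNIV. b * P$i$k)"
    by (simp add: right_diff_distrib sum_subtractf if_mult_r mult.commute)
  also have "\<dots> = a * P$i$j - b * (\<Sum>k\<in>UNIV. P$i$k)"
    by (simp add: sum_distrib_left)
  finally show ?thesis .
qed

lemma card_rem: "card (UNIV - {i::'n::finite}) = CARD('n) - 1"
  by (simp add: card_Diff_singleton)

lemma sum_rem: "(\<Sum>j\<in>UNIV. f j) = f (i::'n::finite) + (\<Sum>j\<in>UNIV - {i}. f j)"
  by (simp add: sum.remove)

lemma arith_key:
  fixes a b p q s N :: real
  assumes a: "a > 0" and b: "b > 0" and ab: "(2*N-2)*b \<le> a" and N: "N \<ge> 3"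
    and Nint: "N = 3 \<or> N \<ge> 4"
    and q: "q \<ge> 0" and pq: "q \<le> p" and sp: "s \<ge> p + 2*q" and s: "s > 0"
  shows "a^2*(p-q) + a*b*(N-4)*(p+q) + a*b * s - (N-2)*b^2 * s > 0"
  using Nint
proof
  assume N3: "N = 3"
  have ab4: "4*b \<le> a" using ab N3 by simp
  have abpos: "a^2-b^2 > 0"
  proof -
    have "a^2-b^2 = (a-b)*(a+b)" by (simp add: algebra_simps power2_eq_square)
    moreover have "(a-b)*(a+b) > 0" using b ab4 by (intro mult_pos_pos) auto
    ultimately show ?thesis by simp
  qed
  show ?thesis
  proof (cases "p > 0")
    case True
    have e: "a^2*(p-q) + a*b*(N-4)*(p+q) + a*b * s - (N-2)*b^2 * s = a^2*(p-q) - a*b*(p+q) + b * s*(a-b)"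
      using N3 by (simp add: algebra_simps power2_eq_square)
    have "b * s*(a-b) \<ge> b*(p+2*q)*(a-b)" using sp b ab4 by (intro mult_left_mono mult_right_mono) auto
    moreover have "a^2*(p-q) - a*b*(p+q) + b*(p+2*q)*(a-b) = (a^2-b^2)*(p-q) + b*q*(a-3*b)"
      by (simp add: algebra_simps power2_eq_square)
    moreover have "(a^2-b^2)*(p-q) + b*q*(a-3*b) > 0"
    proof (cases "q > 0")
      case True
      have "b*q*(a-3*b) > 0" using True b ab4 by simp
      moreover have "(a^2-b^2)*(p-q) \<ge> 0" using pq abpos by simp
      ultimately show ?thesis by linarith
    next
      case False
      hence "q = 0" using q by simp
      then
      show ?thesis using \<open>p>0\<close> abpos by simp
    qed
    ultimately show ?thesis using e by linarith
  next
    case False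
    hence "p = 0" "q = 0" using q pq by auto
    moreover have "b * s*(a-b) > 0" using b s ab4 by simp
    ultimately show ?thesis using N3 by (simp add: algebra_simps power2_eq_square)
  qed
next
  assume N4: "N \<ge> 4"
  have t1: "a^2*(p-q) \<ge> 0" using pq by simp
  have t2: "a*b*(N-4)*(p+q) \<ge> 0" using a b N4 q pq by simp
  have "(N-2)*b < a"
  proof -
    have "(N-2)*b < (2*N-2)*b" using b N by simp
    thus ?thesis using ab by linarith
  qed
  hence "b * s*(a-(N-2)*b) > 0" using b s by simp
  moreover have "a*b * s - (N-2)*b^2 * s = b * s*(a-(N-2)*b)" by (simp add: algebra_simps power2_eq_square)
  ultimately show ?thesis using t1 t2 by linarith
qed

lemma prod_form:
  fixes x y u v :: real
  shows "(x *\<^sub>R mat 1 - y *\<^sub>R ones_mat) ** (u *\<^sub>R mat 1 - v *\<^sub>R ones_mat)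
     = (x*u) *\<^sub>R mat 1 - (x * v + y*u - real CARD('n) * y * v) *\<^sub>R (ones_mat :: real^'n^'n)"
proof -
  have "\<And>i j. ((x *\<^sub>R mat 1 - y *\<^sub>R ones_mat) ** (u *\<^sub>R mat 1 - v *\<^sub>R ones_mat)) $ i $ j
     = ((x*u) *\<^sub>R mat 1 - (x * v + y*u - real CARD('n) * y * v) *\<^sub>R (ones_mat :: real^'n^'n)) $ i $ j"
  proof -
    fix i j :: 'n
    have s: "(\<Sum>k\<in>UNIV. (x *\<^sub>R mat 1 - y *\<^sub>R ones_mat :: real^'n^'n) $ i $ k) = x - real CARD('n) * y"
      by (simp add: mat_def ones_mat_def sum_subtractf if_mult_r)
    show "?thesis i j"
      unfolding mult_T_right s by (simp add: T_entry ones_mat_def algebra_simps)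
  qed
  thus ?thesis by (simp add: vec_eq_iff)
qed

theorem proposition5p4:
  fixes P :: "real^'n^'n" and l \<alpha> :: real
  assumes "CARD('n) \<ge> 3"
    and "l > 0"
    and "\<alpha> \<ge> (real CARD('n) - 2) * l"
    and "P \<noteq> 0"
    and "transpose P = P"
    and "diag_dominant P"
    and "\<forall>i j. P $ i $ j \<ge> 0"
  shows "let S = \<alpha> *\<^sub>R mat 1 + l *\<^sub>R ones_mat;
             Q = matrix_inv S ** P ** matrix_inv S
         in \<forall>i. Q $ i $ i - (\<Sum>j\<in>UNIV - {i}. Q $ i $ j) > 0"
proof -
  note n3 = assms(1) and lpos = assms(2) and al = assms(3) and Pnz = assms(4)
    and sym = assms(5) and dd = assms(6) and nn = assms(7)
  define N where "N = real CARD('n)"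
  have N3: "N \<ge> 3" using n3 unfolding N_def by simp
  have "CARD('n) = 3 \<or> CARD('n) \<ge> 4" using n3 by linarith
  hence Nint: "N = 3 \<or> N \<ge> 4" unfolding N_def by auto
  have alpos: "\<alpha> > 0"
  proof -
    have "(N - 2) * l > 0" using N3 lpos by simp
    thus ?thesis using al unfolding N_def by linarith
  qed
  have "N*l > 0" using lpos N3 by simp
  hence dpos: "\<alpha> + N*l > 0" using alpos by linarith
  define a where "a = 1/\<alpha>"
  define b where "b = l/(\<alpha>*(\<alpha>+N*l))"
  have apos: "a > 0" using alpos unfolding a_def by simp
  have bpos: "b > 0" using alpos dpos lpos unfolding b_def by simp
  have bkey: "b*(\<alpha>+N*l) = a*l"
  proof -
    have "b*(\<alpha>+N*l) = l/\<alpha>" unfolding b_def using alpos dpos by simp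
    thus ?thesis unfolding a_def by simp
  qed
  have ab: "(2*N-2)*b \<le> a"
  proof -
    have "(2*N-2)*l \<le> \<alpha>+N*l" using al unfolding N_def by (simp add: algebra_simps)
    hence "(2*N-2)*l*b \<le> (\<alpha>+N*l)*b" using bpos by (intro mult_right_mono) auto
    hence "((2*N-2)*b)*l \<le> a*l" using bkey by (simp add: algebra_simps)
    thus ?thesis using lpos by simp
  qed
  define S where "S = \<alpha> *\<^sub>R mat 1 + l *\<^sub>R (ones_mat :: real^'n^'n)"
  define T where "T = a *\<^sub>R mat 1 - b *\<^sub>R (ones_mat :: real^'n^'n)"
  have S': "S = \<alpha> *\<^sub>R mat 1 - (-l) *\<^sub>R ones_mat" unfolding S_def by simp
  have c1: "\<alpha> * a = 1" unfolding a_def using alpos by simp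
  have c2: "\<alpha>*b + (-l)*a - N*(-l)*b = 0" using bkey by (simp add: algebra_simps)
  have c3: "a*(-l) + b*\<alpha> - N*b*(-l) = 0" using bkey by (simp add: algebra_simps)
  have ST: "S ** T = mat 1" unfolding S' T_def prod_form N_def[symmetric] using c1 c2 by simp
  have TS: "T ** S = mat 1" unfolding S' T_def prod_form N_def[symmetric] using c1 c3
    by (simp add: mult.commute)
  have invS: "matrix_inv S = T" by (rule inv_unique[OF ST TS])
  have symP: "P$x$y = P$y$x" for x y
  proof -
    have "P$x$y = (transpose P)$x$y" using sym by simp
    thus ?thesis by (simp add: transpose_def)
  qed
  define r where "r i = (\<Sum>k\<in>UNIV. P$i$k)" for i
  define s where "s = (\<Sum>k\<in>UNIV. r k)"
  have col: "(\<Sum>k\<in>UNIV. P$k$j) = r j" for j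
  proof -
    have "P$k$j = P$j$k" for k
      by (rule symP)
    thus ?thesis unfolding r_def by simp
  qed
  define Q where "Q = T ** P ** T"
  have TP: "(T ** P) $ i $ j = a * P$i$j - b * r j" for i j
    unfolding T_def mult_T_left col ..
  have Qe: "Q $ i $ j = a*a*P$i$j - a*b*r j - a*b*r i + b*b * s" for i j
  proof -
    have "Q $ i $ j = a * (T**P)$i$j - b * (\<Sum>k\<in>UNIV. (T**P)$i$k)"
      unfolding Q_def T_def by (rule mult_T_right)
    also have "(\<Sum>k\<in>UNIV. (T**P)$i$k) = a * r i - b * s"
      unfolding TP by (simp add: sum_subtractf sum_distrib_left r_def s_def)
    finally show ?thesis unfolding TP by (simp add: algebra_simps)
  qed
  have cardr: "real (card (UNIV - {i::'n})) = N - 1" for i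
    unfolding N_def using n3 by (simp add: card_Diff_singleton of_nat_diff)
  show ?thesis unfolding Let_def S_def[symmetric] invS Q_def[symmetric]
  proof
    fix i
    define p where "p = P$i$i"
    define q where "q = (\<Sum>j\<in>UNIV - {i}. P$i$j)"
    have ri: "r i = p + q" unfolding r_def p_def q_def by (rule sum_rem)
    have sr: "s = r i + (\<Sum>j\<in>UNIV - {i}. r j)" unfolding s_def by (rule sum_rem)
    have sumQ: "(\<Sum>j\<in>UNIV - {i}. Q $ i $ j) = a*a*q - a*b*(s - r i) - (N-1)*a*b*r i + (N-1)*b*b * s"
      unfolding Qe using sr cardr[of i]
      by (simp add: sum_subtractf sum.distrib sum_distrib_left q_def)
    have D: "Q $ i $ i - (\<Sum>j\<in>UNIV - {i}. Q $ i $ j) = a^2*(p-q) + a*b*(N-4)*(p+q) + a*b * s - (N-2)*b^2 * s"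
    proof -
      have Qii: "Q$i$i = a*a*p - a*b*r i - a*b*r i + b*b * s" unfolding p_def by (rule Qe)
      show ?thesis unfolding sumQ Qii ri by (simp add: algebra_simps power2_eq_square)
    qed
    have q0: "q \<ge> 0" unfolding q_def using nn by (simp add: sum_nonneg)
    have pq: "q \<le> p" using dd nn unfolding diag_dominant_def dd_margin_def p_def q_def by auto
    have rj: "r j \<ge> 0" for j unfolding r_def using nn by (simp add: sum_nonneg)
    have "(\<Sum>j\<in>UNIV - {i}. r j) \<ge> (\<Sum>j\<in>UNIV - {i}. P$j$i)"
      by (rule sum_mono) (use nn in \<open>auto simp: r_def intro!: member_le_sum\<close>)
    moreover have "(\<Sum>j\<in>UNIV - {i}. P$j$i) = q"
      unfolding q_def using symP by simp
    ultimately have sp: "s \<ge> p + 2*q" using sr ri by linarith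
    have spos: "s > 0"
    proof -
      obtain i0 j0 where nz: "P$i0$j0 \<noteq> 0" using Pnz by (metis vec_eq_iff zero_index)
      have "P$i0$j0 \<le> r i0" unfolding r_def using nn
        by (intro member_le_sum) auto
      moreover have "r i0 \<le> s" unfolding s_def using rj by (intro member_le_sum) auto
      ultimately show ?thesis using nz nn by (metis order_le_less order_less_le_trans)
    qed
    show "Q $ i $ i - (\<Sum>j\<in>UNIV - {i}. Q $ i $ j) > 0"
      unfolding D by (rule arith_key[OF apos bpos ab N3 Nint q0 pq sp spos])
  qed
qed

end
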